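(* For all integers $m\ge 2$ and $r\ge 1$, $$U_m h_r=\sum_{i=1}^{r}\alpha_{m,r}(i)\,h_i .$$
   Context: For integers $m\ge2$, $r\ge1$, the numbers $\alpha_{m,r}(1),\ldots,\alpha_{m,r}(r)$ are the unique integers such that $\binom{mn+r-1}{r}=\sum_{i=1}^{r}\alpha_{m,r}(i)\binom{n+i-1}{i}$ for all positive integers $n$. For $r\ge 0$, $h_r(q):=\dfrac{q}{(1-q)^{r+1}}\in\mathbb{Z}[[q]]$. For $m\ge 2$, $U_m:\mathbb{Z}[[q]]\to\mathbb{Z}[[q]]$ is the linear operator $U_m\big(\sum_{n\ge0}a(n)q^n\big)=\sum_{n\ge0}a(mn)q^n$. *)

theory Defs
  imports "HOL-Computational_Algebra.Formal_Power_Series"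
begin

definition alpha :: "nat \<Rightarrow> nat \<Rightarrow> nat \<Rightarrow> int" where
  "alpha m r = (THE a. (\<forall>i. i \<notin> {1..r} \<longrightarrow> a i = 0) \<and>
     (\<forall>n::nat. n > 0 \<longrightarrow>
        int ((m*n + r - 1) choose r) = (\<Sum>i=1..r. a i * int ((n + i - 1) choose i))))"

definition h :: "nat \<Rightarrow> int fps" where
  "h r = (THE f. (1 - fps_X) ^ (r + 1) * f = fps_X)"

definition U :: "nat \<Rightarrow> int fps \<Rightarrow> int fps" where
  "U m f = Abs_fps (\<lambda>n. fps_nth f (m * n))"

end

theory Submission
  imports Defs
begin

unbundle fps_syntax

abbreviation "OX \<equiv> (1 - fps_X :: int fps)"

lemma OX_mult_nth: "(OX * F) $ n = F $ n - (if n = 0 then 0 else F $ (n - 1))"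
  by (simp add: algebra_simps)

lemma OX_pow_nz: "OX ^ k \<noteq> 0"
proof -
  have "OX \<noteq> 0" by (metis fps_one_nth fps_X_nth fps_sub_nth fps_zero_nth diff_zero one_neq_zero)
  then show ?thesis by simp
qed

lemma OX_pow_nth: "(\<forall>n>j. (OX ^ j) $ n = 0) \<and> (OX ^ j) $ j = (-1) ^ j"
proof (induction j)
  case 0
  then show ?case by auto
next
  case (Suc j)
  have e: "OX ^ Suc j = OX * OX ^ j" by simp
  show ?case unfolding e OX_mult_nth using Suc by auto
qed

definition g :: "nat \<Rightarrow> int fps" where
  "g i = Abs_fps (\<lambda>n. if n = 0 then 0 else of_nat ((n - 1 + i) choose i))"

lemma g_step: "OX * g (Suc i) = g i"
proof (rule fps_ext)
  fix n
  show "(OX * g (Suc i)) $ n = g i $ n"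
  proof (cases n)
    case 0 then show ?thesis by (simp add: OX_mult_nth g_def)
  next
    case (Suc k)
    then show ?thesis
    proof (cases k)
      case 0 then show ?thesis using Suc by (simp add: OX_mult_nth g_def)
    next
      case (Suc l)
      have "(Suc l + Suc i) choose Suc i = ((l + Suc i) choose Suc i) + ((l + Suc i) choose i)"
        by simp
      then show ?thesis using \<open>n = Suc k\<close> Suc by (simp add: OX_mult_nth g_def)
    qed
  qed
qed

lemma g0: "OX * g 0 = fps_X"
  by (rule fps_ext) (auto simp: OX_mult_nth g_def)

lemma g_pow: "OX ^ (i + 1) * g i = fps_X"
proof (induction i)
  case 0 then show ?case using g0 by simp
next
  case (Suc i)
  have "OX ^ (Suc i + 1) * g (Suc i) = OX ^ (i + 1) * (OX * g (Suc i))"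
    by (simp only: add_Suc power_Suc2 mult.assoc)
  also have "\<dots> = OX ^ (i + 1) * g i" by (simp add: g_step)
  also have "\<dots> = fps_X" by (rule Suc.IH)
  finally show ?case .
qed

lemma h_eq: "h i = g i"
  unfolding h_def
proof (rule the_equality)
  show "(1 - fps_X) ^ (i + 1) * g i = fps_X" by (rule g_pow)
  fix f assume "(1 - fps_X) ^ (i + 1) * f = (fps_X :: int fps)"
  then have "OX ^ (i + 1) * f = OX ^ (i + 1) * g i" using g_pow by simp
  then show "f = g i" using OX_pow_nz by simp
qed

lemma h_pow: "h i * OX ^ (i + 1) = fps_X"
  using g_pow h_eq by (simp add: mult.commute)


lemma OX_pow_nth_gt: "n > j \<Longrightarrow> (OX ^ j) $ n = 0"
  using OX_pow_nth by blast

lemma OX_pow_nth_eq: "(OX ^ j) $ j = (-1) ^ j"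
  using OX_pow_nth by blast

lemma expand: "(\<forall>n\<ge>k. R $ n = 0) \<Longrightarrow> \<exists>e. R = (\<Sum>j<k. fps_const (e j) * OX ^ j)"
proof (induction k arbitrary: R)
  case 0
  then have "R = 0" by (intro fps_ext) auto
  then show ?case by simp
next
  case (Suc k)
  define c where "c = R $ k * (-1) ^ k"
  define R' where "R' = R - fps_const c * OX ^ k"
  have "\<forall>n\<ge>k. R' $ n = 0"
  proof (intro allI impI)
    fix n assume "k \<le> n"
    show "R' $ n = 0"
    proof (cases "n = k")
      case True
      have "((-1::int) ^ k) * (-1) ^ k = 1"
        by (simp flip: power_mult_distrib)
      then show ?thesis using True unfolding R'_def c_def
        by (simp add: OX_pow_nth_eq mult.assoc)
    next
      case False
      then show ?thesis using Suc.prems \<open>k \<le> n\<close> unfolding R'_def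
        by (simp add: OX_pow_nth_gt)
    qed
  qed
  then obtain e where e: "R' = (\<Sum>j<k. fps_const (e j) * OX ^ j)" using Suc.IH by blast
  define e' where "e' = e(k := c)"
  have "(\<Sum>j<Suc k. fps_const (e' j) * OX ^ j) = (\<Sum>j<k. fps_const (e' j) * OX ^ j) + fps_const c * OX ^ k"
    by (simp add: e'_def)
  also have "(\<Sum>j<k. fps_const (e' j) * OX ^ j) = (\<Sum>j<k. fps_const (e j) * OX ^ j)"
    by (intro sum.cong) (auto simp: e'_def)
  finally have "(\<Sum>j<Suc k. fps_const (e' j) * OX ^ j) = R' + fps_const c * OX ^ k" using e by simp
  then have "(\<Sum>j<Suc k. fps_const (e' j) * OX ^ j) = R" by (simp add: R'_def)
  then show ?case by metis
qed

lemma uniq: "(\<Sum>j<k. fps_const (e j) * OX ^ j) = 0 \<Longrightarrow> \<forall>j<k. e j = 0"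
proof (induction k)
  case 0 then show ?case by simp
next
  case (Suc k)
  have "(\<Sum>j<Suc k. fps_const (e j) * OX ^ j) $ k = e k * (-1) ^ k"
  proof -
    have "(\<Sum>j<k. fps_const (e j) * OX ^ j) $ k = 0"
      unfolding fps_sum_nth by (intro sum.neutral) (simp add: OX_pow_nth_gt)
    then show ?thesis by (simp add: OX_pow_nth_eq)
  qed
  then have "e k * (-1) ^ k = 0" using Suc.prems by (metis fps_zero_nth)
  then have ek: "e k = 0" by simp
  then have "(\<Sum>j<k. fps_const (e j) * OX ^ j) = 0" using Suc.prems by simp
  then show ?case using Suc.IH ek less_Suc_eq by auto
qed

lemma bounded_mult: "(\<forall>n>a. A $ n = 0) \<Longrightarrow> (\<forall>n>b. B $ n = 0) \<Longrightarrow> n > a + b \<Longrightarrow> (A * B) $ n = (0::int)"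
  unfolding fps_mult_nth
proof (intro sum.neutral ballI)
  fix i assume "(\<forall>n>a. A $ n = 0)" "(\<forall>n>b. B $ n = 0)" "n > a + b" "i \<in> {0..n}"
  then show "A $ i * B $ (n - i) = 0"
    by (cases "i > a") auto
qed

lemma bounded_pow: "(\<forall>n>a. A $ n = 0) \<Longrightarrow> n > a * k \<Longrightarrow> (A ^ k) $ n = (0::int)"
proof (induction k arbitrary: n)
  case 0 then show ?case by simp
next
  case (Suc k)
  have "A ^ Suc k = A * A ^ k" by simp
  then show ?case using bounded_mult[of a A "a * k" "A ^ k" n] Suc by (simp add: add.commute)
qed


definition S :: "nat \<Rightarrow> int fps" where "S m = (\<Sum>j<m. fps_X ^ j)"

lemma S_mult: "OX * S m = 1 - fps_X ^ m"
proof (induction m)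
  case 0 then show ?case by (simp add: S_def)
next
  case (Suc m)
  have "S (Suc m) = S m + fps_X ^ m" by (simp add: S_def)
  then have "OX * S (Suc m) = OX * S m + OX * fps_X ^ m" by (simp only: distrib_left)
  also have "\<dots> = 1 - fps_X ^ m + (fps_X ^ m - fps_X ^ Suc m)" using Suc by (simp add: left_diff_distrib)
  finally show ?case by simp
qed

lemma S_nth: "n > m - 1 \<Longrightarrow> m \<ge> 1 \<Longrightarrow> S m $ n = 0"
  unfolding S_def fps_sum_nth by (intro sum.neutral) auto

lemma U_mult1: assumes m: "m \<ge> 1" shows "U m (A * (1 - fps_X ^ m)) = U m A * OX"
proof (rule fps_ext)
  fix n
  have "(A * (1 - fps_X ^ m)) $ (m * n) = A $ (m*n) - (fps_X ^ m * A) $ (m * n)"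
    by (simp add: algebra_simps)
  also have "\<dots> = A $ (m*n) - (if n = 0 then 0 else A $ (m * (n - 1)))"
    using m by (cases n) (auto simp: fps_X_power_mult_nth fps_X_power_mult_right_nth mult.commute)
  moreover have "(U m A * OX) $ n = (OX * U m A) $ n" by (simp only: mult.commute)
  ultimately show "U m (A * (1 - fps_X ^ m)) $ n = (U m A * OX) $ n"
    unfolding OX_mult_nth by (simp add: U_def)
qed

lemma U_pow: "m \<ge> 1 \<Longrightarrow> U m (A * (1 - fps_X ^ m) ^ k) = U m A * OX ^ k"
proof (induction k arbitrary: A)
  case 0 then show ?case by simp
next
  case (Suc k)
  have "U m (A * (1 - fps_X ^ m) ^ Suc k) = U m ((A * (1 - fps_X ^ m)) * (1 - fps_X ^ m) ^ k)"
    by (simp add: algebra_simps)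
  also have "\<dots> = U m (A * (1 - fps_X ^ m)) * OX ^ k" using Suc by simp
  also have "\<dots> = U m A * OX ^ Suc k" using U_mult1[OF Suc.prems] by (simp add: mult.assoc)
  finally show ?case .
qed

lemma key:
  assumes "r \<ge> 1"
  shows "(\<Sum>i=1..r. fps_const (a i) * h i) * OX ^ (r + 1)
       = fps_X * (\<Sum>j<r. fps_const (a (r - j)) * OX ^ j)"
proof -
  have "(\<Sum>i=1..r. fps_const (a i) * h i) * OX ^ (r + 1)
      = (\<Sum>i=1..r. fps_const (a i) * OX ^ (r - i) * (h i * OX ^ (i + 1)))"
    unfolding sum_distrib_right
  proof (intro sum.cong refl)
    fix i assume "i \<in> {1..r}"
    then have e: "OX ^ (r + 1) = OX ^ (r - i) * OX ^ (i + 1)"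
      by (simp flip: power_add)
    show "fps_const (a i) * h i * OX ^ (r + 1) = fps_const (a i) * OX ^ (r - i) * (h i * OX ^ (i + 1))"
      by (subst e) (simp only: mult_ac)
  qed
  also have "\<dots> = fps_X * (\<Sum>i=1..r. fps_const (a i) * OX ^ (r - i))"
    unfolding h_pow sum_distrib_left by (simp only: mult_ac)
  also have "(\<Sum>i=1..r. fps_const (a i) * OX ^ (r - i)) = (\<Sum>j<r. fps_const (a (r - j)) * OX ^ j)"
    by (rule sum.reindex_bij_witness[of _ "\<lambda>j. r - j" "\<lambda>i. r - i"]) auto
  finally show ?thesis .
qed

lemma hcoef: "i \<ge> 1 \<Longrightarrow> h i $ n = of_nat ((n + i - 1) choose i)"
  by (cases n) (auto simp: h_eq g_def)

lemma sumcoef: "(\<Sum>i=1..r. fps_const (a i) * h i) $ n = (\<Sum>i=1..r. a i * of_nat ((n + i - 1) choose i))"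
  unfolding fps_sum_nth by (intro sum.cong refl) (simp add: hcoef)


lemma existence:
  assumes m: "m \<ge> 2" and r: "r \<ge> 1"
  shows "\<exists>a. U m (h r) = (\<Sum>i=1..r. fps_const (a i) * h i)"
proof -
  have m1: "m \<ge> 1" using m by simp
  define P where "P = fps_X * S m ^ (r + 1)"
  have "h r * (1 - fps_X ^ m) ^ (r + 1) = h r * (OX * S m) ^ (r + 1)"
    by (simp only: S_mult)
  also have "\<dots> = (h r * OX ^ (r + 1)) * S m ^ (r + 1)"
    by (simp only: power_mult_distrib mult_ac)
  also have "\<dots> = P" by (simp only: h_pow P_def)
  finally have hP: "h r * (1 - fps_X ^ m) ^ (r + 1) = P" .
  define Q where "Q = U m P"
  have UQ: "U m (h r) * OX ^ (r + 1) = Q"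
    unfolding Q_def using U_pow[OF m1, of "h r" "r + 1"] hP by simp
  have Sbound: "\<forall>n>m - 1. S m $ n = 0" using S_nth m1 by blast
  have Q0: "Q $ 0 = 0" by (simp add: Q_def U_def P_def)
  have Qbound: "Q $ n = 0" if "n \<ge> r + 1" for n
  proof -
    have "m * n \<ge> m * (r + 1)" using mult_le_mono2[OF that] .
    moreover have "m * (r + 1) = (m - 1) * (r + 1) + (r + 1)" using m1
      by (metis Suc_diff_1 Suc_eq_plus1 add.commute less_le_trans mult_Suc zero_less_one)
    ultimately have gt: "m * n - 1 > (m - 1) * (r + 1)" using r by linarith
    have pos: "m * n > 0"
    proof (rule ccontr)
      assume "\<not> 0 < m * n" then have "m * n = 0" by simp
      with gt show False by simp
    qed
    have "Q $ n = P $ (m * n)" by (simp add: Q_def U_def)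
    also have "\<dots> = (S m ^ (r + 1)) $ (m * n - 1)" using pos by (simp add: P_def)
    also have "\<dots> = 0" using bounded_pow[OF Sbound gt] .
    finally show ?thesis .
  qed
  define R where "R = Abs_fps (\<lambda>n. Q $ (n + 1))"
  have XR: "fps_X * R = Q"
    by (rule fps_ext) (auto simp: R_def Q0 fps_X_mult_nth)
  have "\<forall>n\<ge>r. R $ n = 0" using Qbound by (simp add: R_def)
  then obtain e where e: "R = (\<Sum>j<r. fps_const (e j) * OX ^ j)" using expand by blast
  define a where "a i = e (r - i)" for i
  have "(\<Sum>j<r. fps_const (a (r - j)) * OX ^ j) = (\<Sum>j<r. fps_const (e j) * OX ^ j)"
    by (intro sum.cong refl) (simp add: a_def)
  then have "(\<Sum>i=1..r. fps_const (a i) * h i) * OX ^ (r + 1) = U m (h r) * OX ^ (r + 1)"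
    using key[OF r, of a] e XR UQ by simp
  then have "(\<Sum>i=1..r. fps_const (a i) * h i) = U m (h r)"
    using OX_pow_nz by (simp only: mult_cancel_right) simp
  then show ?thesis by metis
qed

lemma uniqueness:
  assumes r: "r \<ge> 1"
    and "(\<Sum>i=1..r. fps_const (a i) * h i) = (\<Sum>i=1..r. fps_const (b i) * h i)"
    and "i \<in> {1..r}"
  shows "a i = b i"
proof -
  have "fps_X * (\<Sum>j<r. fps_const (a (r - j)) * OX ^ j) = fps_X * (\<Sum>j<r. fps_const (b (r - j)) * OX ^ j)"
    using key[OF r, of a] key[OF r, of b] assms(2) by simp
  then have "(\<Sum>j<r. fps_const (a (r - j)) * OX ^ j) = (\<Sum>j<r. fps_const (b (r - j)) * OX ^ j)"
    by simp
  then have "(\<Sum>j<r. fps_const (a (r - j)) * OX ^ j) - (\<Sum>j<r. fps_const (b (r - j)) * OX ^ j) = 0"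
    by simp
  then have "(\<Sum>j<r. fps_const (a (r - j) - b (r - j)) * OX ^ j) = 0"
  proof -
    have "(\<Sum>j<r. fps_const (a (r - j) - b (r - j)) * OX ^ j)
        = (\<Sum>j<r. fps_const (a (r - j)) * OX ^ j - fps_const (b (r - j)) * OX ^ j)"
      by (intro sum.cong refl) (simp flip: fps_const_sub add: left_diff_distrib)
    then show ?thesis using \<open>_ - _ = 0\<close> by (simp only: sum_subtractf)
  qed
  then have "\<forall>j<r. a (r - j) - b (r - j) = 0" by (rule uniq)
  moreover have "r - i < r" using assms(3) by auto
  ultimately have "a (r - (r - i)) - b (r - (r - i)) = 0" by blast
  then show ?thesis using assms(3) by simp
qed

theorem lemma2p3:
  fixes m r :: nat
  assumes "m \<ge> 2" and "r \<ge> 1"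
  shows "U m (h r) = (\<Sum>i=1..r. fps_const (alpha m r i) * h i)"
proof -
  define Pr where "Pr a \<longleftrightarrow> (\<forall>i. i \<notin> {1..r} \<longrightarrow> a i = 0) \<and>
     (\<forall>n::nat. n > 0 \<longrightarrow>
        int ((m*n + r - 1) choose r) = (\<Sum>i=1..r. a i * int ((n + i - 1) choose i)))" for a
  have Ucoef: "U m (h r) $ n = int ((m*n + r - 1) choose r)" for n
    using assms(2) by (simp add: U_def hcoef)
  have fwd: "U m (h r) = (\<Sum>i=1..r. fps_const (a i) * h i)" if "Pr a" for a
  proof (rule fps_ext)
    fix n show "U m (h r) $ n = (\<Sum>i=1..r. fps_const (a i) * h i) $ n"
    proof (cases "n = 0")
      case True
      then show ?thesis using assms(2) by (simp only: Ucoef sumcoef) (auto intro!: sum.neutral simp: binomial_eq_0)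
    next
      case False
      then show ?thesis using that unfolding Pr_def by (simp only: Ucoef sumcoef)
    qed
  qed
  have bwd: "Pr a" if "\<forall>i. i \<notin> {1..r} \<longrightarrow> a i = 0" "U m (h r) = (\<Sum>i=1..r. fps_const (a i) * h i)" for a
    unfolding Pr_def
  proof (intro conjI allI impI)
    fix i assume "i \<notin> {1..r}" then show "a i = 0" using that by simp
  next
    fix n :: nat
    show "int ((m*n + r - 1) choose r) = (\<Sum>i=1..r. a i * int ((n + i - 1) choose i))"
      using that(2) Ucoef[of n] sumcoef[of a r n] by simp
  qed
  obtain a0 where a0: "U m (h r) = (\<Sum>i=1..r. fps_const (a0 i) * h i)"
    using existence[OF assms] by blast
  define a where "a i = (if i \<in> {1..r} then a0 i else 0)" for i
  have "(\<Sum>i=1..r. fps_const (a0 i) * h i) = (\<Sum>i=1..r. fps_const (a i) * h i)"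
    by (intro sum.cong refl) (simp add: a_def)
  then have aeq: "U m (h r) = (\<Sum>i=1..r. fps_const (a i) * h i)" using a0 by simp
  have Pa: "Pr a" by (rule bwd) (auto simp: a_def aeq)
  have th: "alpha m r = (THE a. Pr a)" by (simp add: alpha_def Pr_def)
  have "(THE a. Pr a) = a"
  proof (rule the_equality)
    show "Pr a" by (rule Pa)
  next
    fix b assume Pb: "Pr b"
    show "b = a"
    proof
      fix i show "b i = a i"
      proof (cases "i \<in> {1..r}")
        case True
        have "(\<Sum>i=1..r. fps_const (b i) * h i) = (\<Sum>i=1..r. fps_const (a i) * h i)"
          using fwd[OF Pb] fwd[OF Pa] by simp
        then show ?thesis using uniqueness[OF assms(2) _ True] by blast
      next
        case False
        then show ?thesis using Pb Pa unfolding Pr_def by simp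
      qed
    qed
  qed
  then have "alpha m r = a" using th by simp
  then show ?thesis using aeq by simp
qed

end
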